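(* Let $G$ be a graph with girth $g(G)\ge 7$. Then every color class $C$ of a partition of $V(G)$ into $\chi_{\mu_2}(G)$ many $2$-distance mutual-visibility sets is a subset of the closed neighborhood $N_G[v]$ of some vertex $v$ of $G$. In particular, if $|C|\ge 3$, then $C$ is a subset of the open neighborhood $N_G(v)$ of some vertex $v$ of $G$.
   Context: The girth $g(G)$ is the length of a shortest cycle of $G$, with $g(G)=\infty$ if $G$ is a forest. $N_G(v)$ is the set of neighbors of $v$ and $N_G[v]=N_G(v)\cup\{v\}$. A set $M\subseteq V(G)$ is a $2$-distance mutual-visibility set if for every two vertices $u,v\in M$ there exists a shortest $u,v$-path of length at most $2$ none of whose internal vertices lies in $M$. $\chi_{\mu_2}(G)$ is the minimum cardinality of a partition of $V(G)$ into $2$-distance mutual-visibility sets. *)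

theory Defs
  imports Main "HOL-Library.Extended_Nat" "HOL-Library.Disjoint_Sets"
begin

definition simple_graph :: "'a set \<Rightarrow> ('a \<Rightarrow> 'a \<Rightarrow> bool) \<Rightarrow> bool" where
  "simple_graph V E \<longleftrightarrow> finite V \<and> (\<forall>u v. E u v \<longrightarrow> u \<in> V \<and> v \<in> V)
     \<and> (\<forall>u v. E u v \<longrightarrow> E v u) \<and> (\<forall>v. \<not> E v v)"

definition is_path :: "'a set \<Rightarrow> ('a \<Rightarrow> 'a \<Rightarrow> bool) \<Rightarrow> 'a list \<Rightarrow> bool" where
  "is_path V E p \<longleftrightarrow> p \<noteq> [] \<and> set p \<subseteq> V \<and> distinct p
     \<and> (\<forall>i. Suc i < length p \<longrightarrow> E (p ! i) (p ! Suc i))"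

definition path_between :: "'a set \<Rightarrow> ('a \<Rightarrow> 'a \<Rightarrow> bool) \<Rightarrow> 'a list \<Rightarrow> 'a \<Rightarrow> 'a \<Rightarrow> bool" where
  "path_between V E p u v \<longleftrightarrow> is_path V E p \<and> hd p = u \<and> last p = v"

text \<open>Distance (infinite if no path exists).\<close>
definition gdist :: "'a set \<Rightarrow> ('a \<Rightarrow> 'a \<Rightarrow> bool) \<Rightarrow> 'a \<Rightarrow> 'a \<Rightarrow> enat" where
  "gdist V E u v = Inf {enat (length p - 1) | p. path_between V E p u v}"

definition shortest_path :: "'a set \<Rightarrow> ('a \<Rightarrow> 'a \<Rightarrow> bool) \<Rightarrow> 'a list \<Rightarrow> 'a \<Rightarrow> 'a \<Rightarrow> bool" where
  "shortest_path V E p u v \<longleftrightarrow> path_between V E p u v \<and> enat (length p - 1) = gdist V E u v"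

text \<open>Cycles: at least 3 distinct vertices, consecutive adjacent, last adjacent to first.
  Girth = minimum cycle length, infinity for forests.\<close>
definition is_cycle :: "'a set \<Rightarrow> ('a \<Rightarrow> 'a \<Rightarrow> bool) \<Rightarrow> 'a list \<Rightarrow> bool" where
  "is_cycle V E c \<longleftrightarrow> length c \<ge> 3 \<and> is_path V E c \<and> E (last c) (hd c)"

definition girth :: "'a set \<Rightarrow> ('a \<Rightarrow> 'a \<Rightarrow> bool) \<Rightarrow> enat" where
  "girth V E = Inf {enat (length c) | c. is_cycle V E c}"

definition nbhd :: "'a set \<Rightarrow> ('a \<Rightarrow> 'a \<Rightarrow> bool) \<Rightarrow> 'a \<Rightarrow> 'a set" where
  "nbhd V E v = {u \<in> V. E v u}"

definition closed_nbhd :: "'a set \<Rightarrow> ('a \<Rightarrow> 'a \<Rightarrow> bool) \<Rightarrow> 'a \<Rightarrow> 'a set" where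
  "closed_nbhd V E v = insert v (nbhd V E v)"

definition mv2_set :: "'a set \<Rightarrow> ('a \<Rightarrow> 'a \<Rightarrow> bool) \<Rightarrow> 'a set \<Rightarrow> bool" where
  "mv2_set V E M \<longleftrightarrow> M \<subseteq> V \<and> (\<forall>u\<in>M. \<forall>v\<in>M. \<exists>p. shortest_path V E p u v
       \<and> length p - 1 \<le> 2 \<and> set (butlast (tl p)) \<inter> M = {})"

definition mv2_partition :: "'a set \<Rightarrow> ('a \<Rightarrow> 'a \<Rightarrow> bool) \<Rightarrow> 'a set set \<Rightarrow> bool" where
  "mv2_partition V E P \<longleftrightarrow> partition_on V P \<and> (\<forall>C\<in>P. mv2_set V E C)"

definition chi_mu2 :: "'a set \<Rightarrow> ('a \<Rightarrow> 'a \<Rightarrow> bool) \<Rightarrow> nat" where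
  "chi_mu2 V E = (LEAST k. \<exists>P. mv2_partition V E P \<and> card P = k)"

end

theory Submission
  imports Defs
begin

lemma is_path_cons2:
  "is_path V E (a#b#xs) \<longleftrightarrow> a \<in> V \<and> E a b \<and> a \<notin> set (b#xs) \<and> is_path V E (b#xs)"
proof -
  have "(\<forall>i. Suc i < length (a#b#xs) \<longrightarrow> E ((a#b#xs) ! i) ((a#b#xs) ! Suc i)) \<longleftrightarrow>
        E a b \<and> (\<forall>i. Suc i < length (b#xs) \<longrightarrow> E ((b#xs) ! i) ((b#xs) ! Suc i))"
    (is "?L \<longleftrightarrow> ?R")
  proof
    assume L: ?L
    show ?R
    proof
      show "E a b" using L[rule_format, of 0] by simp
      show "\<forall>i. Suc i < length (b#xs) \<longrightarrow> E ((b#xs) ! i) ((b#xs) ! Suc i)"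
        using L by (metis Suc_less_eq length_Cons nth_Cons_Suc)
    qed
  next
    assume R: ?R
    show ?L
    proof (intro allI impI)
      fix i assume "Suc i < length (a#b#xs)"
      then show "E ((a#b#xs) ! i) ((a#b#xs) ! Suc i)" using R
        by (cases i) auto
    qed
  qed
  then show ?thesis unfolding is_path_def by auto
qed
lemma is_path_single: "is_path V E [a] \<longleftrightarrow> a \<in> V" unfolding is_path_def by auto


lemma no_short_cycle:
  assumes "girth V E \<ge> 7" "is_cycle V E c" "length c \<le> 6"
  shows False
proof -
  have "girth V E \<le> enat (length c)"
    unfolding girth_def using assms(2) by (auto intro: Inf_lower)
  with assms(1) have "(7::enat) \<le> enat (length c)" by (rule order_trans)
  with assms(3) show False by simp
qed

lemma idx3: "(i::nat) < 3 \<Longrightarrow> i = 0 \<or> i = 1 \<or> i = 2" by auto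
lemma idx5: "(i::nat) < 5 \<Longrightarrow> i = 0 \<or> i = 1 \<or> i = 2 \<or> i = 3 \<or> i = 4" by auto

lemma no_c4:
  assumes "simple_graph V E" "girth V E \<ge> 7" "E a b" "E b c" "E c d" "E d a" "distinct [a,b,c,d]"
  shows False
proof -
  have "is_cycle V E [a,b,c,d]"
    using assms unfolding is_cycle_def simple_graph_def
    by (simp add: is_path_cons2 is_path_single)
  then show False using no_short_cycle assms(2) by fastforce
qed

lemma no_c3:
  assumes "simple_graph V E" "girth V E \<ge> 7" "E a b" "E b c" "E c a" "distinct [a,b,c]"
  shows False
proof -
  have "is_cycle V E [a,b,c]"
    using assms unfolding is_cycle_def simple_graph_def
    by (simp add: is_path_cons2 is_path_single)
  then show False using no_short_cycle assms(2) by fastforce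
qed

lemma no_c5:
  assumes "simple_graph V E" "girth V E \<ge> 7" "E a b" "E b c" "E c d" "E d e" "E e a" "distinct [a,b,c,d,e]"
  shows False
proof -
  have "is_cycle V E [a,b,c,d,e]"
    using assms unfolding is_cycle_def simple_graph_def
    by (simp add: is_path_cons2 is_path_single)
  then show False using no_short_cycle assms(2) by fastforce
qed

lemma no_c6:
  assumes "simple_graph V E" "girth V E \<ge> 7" "E a b" "E b c" "E c d" "E d e" "E e f" "E f a"
    "distinct [a,b,c,d,e,f]"
  shows False
proof -
  have "is_cycle V E [a,b,c,d,e,f]"
    using assms unfolding is_cycle_def simple_graph_def
    by (simp add: is_path_cons2 is_path_single)
  then show False using no_short_cycle assms(2) by fastforce
qed

lemma rel:
  assumes "mv2_set V E C" "x \<in> C" "y \<in> C" "x \<noteq> y"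
  shows "E x y \<or> (\<exists>w. w \<notin> C \<and> E x w \<and> E w y)"
proof -
  obtain p where p: "path_between V E p x y" "length p - 1 \<le> 2" "set (butlast (tl p)) \<inter> C = {}"
    using assms unfolding mv2_set_def shortest_path_def by blast
  have ne: "p \<noteq> []" and hd: "hd p = x" and la: "last p = y"
    and ed: "\<And>i. Suc i < length p \<Longrightarrow> E (p ! i) (p ! Suc i)"
    using p(1) unfolding path_between_def is_path_def by auto
  have L: "1 \<le> length p \<and> length p \<le> 3" using ne p(2) by (cases p) auto
  then have "length p = 1 \<or> length p = 2 \<or> length p = 3" by arith
  then consider (a) "length p = 1" | (b) "length p = 2" | (c) "length p = 3" by blast
  then show ?thesis
  proof cases
    case a
    then obtain z where "p = [z]" by (cases p) auto
    then show ?thesis using hd la assms(4) by simp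
  next
    case b
    then obtain z1 z2 where "p = [z1,z2]"
      by (cases p; cases "tl p") auto
    then show ?thesis using hd la ed[of 0] by simp
  next
    case c
    then obtain z1 z2 z3 where pz: "p = [z1,z2,z3]"
      by (cases p; cases "tl p"; cases "tl (tl p)") auto
    then show ?thesis using hd la ed[of 0] ed[of 1] p(3) by auto
  qed
qed

theorem lemma3p3:
  fixes V :: "'a set" and E :: "'a \<Rightarrow> 'a \<Rightarrow> bool" and P :: "'a set set" and C :: "'a set"
  assumes "simple_graph V E"
    and "girth V E \<ge> 7"
    and "mv2_partition V E P"
    and "card P = chi_mu2 V E"
    and "C \<in> P"
  shows "(\<exists>v\<in>V. C \<subseteq> closed_nbhd V E v) \<and> (card C \<ge> 3 \<longrightarrow> (\<exists>v\<in>V. C \<subseteq> nbhd V E v))"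
proof -
  note G = assms(1) and g = assms(2)
  have mv: "mv2_set V E C" and CV: "C \<subseteq> V" and Cne: "C \<noteq> {}"
    using assms(3,5) unfolding mv2_partition_def partition_on_def mv2_set_def by auto
  have fin: "finite C" using CV G finite_subset unfolding simple_graph_def by blast
  have Ein: "\<And>u v. E u v \<Longrightarrow> u \<in> V \<and> v \<in> V" and Esym: "\<And>u v. E u v \<Longrightarrow> E v u"
    and Eirr: "\<And>v. \<not> E v v"
    using G unfolding simple_graph_def by auto
  have R: "\<And>x y. x \<in> C \<Longrightarrow> y \<in> C \<Longrightarrow> x \<noteq> y \<Longrightarrow> E x y \<or> (\<exists>w. w \<notin> C \<and> E x w \<and> E w y)"
    using rel[OF mv] by blast
  have main: "(\<exists>v\<in>V. C \<subseteq> nbhd V E v) \<or> (card C \<le> 2 \<and> (\<exists>v\<in>V. C \<subseteq> closed_nbhd V E v))"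
  proof (cases "\<exists>a\<in>C. \<exists>b\<in>C. E a b")
    case True
    then obtain a b where ab: "a \<in> C" "b \<in> C" "E a b" by blast
    have anb: "a \<noteq> b" using ab Eirr by auto
    have sub: "C \<subseteq> {a, b}"
    proof
      fix c assume c: "c \<in> C"
      show "c \<in> {a,b}"
      proof (rule ccontr)
        assume "c \<notin> {a,b}"
        hence ca: "c \<noteq> a" and cb: "c \<noteq> b" by auto
        from R[OF c ab(1) ca] R[OF c ab(2) cb] show False
        proof (elim disjE exE conjE)
          assume "E c a" "E c b" then show False
            using no_c3[OF G g ab(3), of c] Esym ca cb anb by auto
        next
          fix w assume "E c a" "w \<notin> C" "E c w" "E w b"
          then show False
            using no_c4[OF G g ab(3), of w c] Esym ca cb anb ab c by auto
        next
          fix w assume "E c b" "w \<notin> C" "E c w" "E w a"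
          then show False
            using no_c4[OF G g Esym[OF ab(3)], of w c] Esym ca cb anb ab c by auto
        next
          fix w1 w2 assume h: "w1 \<notin> C" "E c w1" "E w1 a" "w2 \<notin> C" "E c w2" "E w2 b"
          show False
          proof (cases "w1 = w2")
            case True
            then show False using no_c3[OF G g ab(3), of w1] h Esym ab anb by auto
          next
            case False
            then show False using no_c5[OF G g ab(3), of w2 c w1] h Esym ab anb c ca cb by auto
          qed
        qed
      qed
    qed
    have "card C \<le> 2" using card_mono[OF _ sub] anb by simp
    moreover have "C \<subseteq> closed_nbhd V E a" using sub ab Ein unfolding closed_nbhd_def nbhd_def by auto
    ultimately show ?thesis using ab CV by blast
  next
    case False
    hence indep: "\<And>a b. a \<in> C \<Longrightarrow> b \<in> C \<Longrightarrow> \<not> E a b" by blast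
    show ?thesis
    proof (cases "\<exists>a\<in>C. \<exists>b\<in>C. a \<noteq> b")
      case False
      then obtain a where "C = {a}" using Cne by blast
      then show ?thesis using CV unfolding closed_nbhd_def by auto
    next
      case True
      then obtain a b where ab: "a \<in> C" "b \<in> C" "a \<noteq> b" by blast
      obtain w where w: "w \<notin> C" "E a w" "E w b" using R[OF ab] indep ab by blast
      have "C \<subseteq> nbhd V E w"
      proof
        fix c assume c: "c \<in> C"
        have "E w c"
        proof (cases "c = a \<or> c = b")
          case True then show ?thesis using w Esym by auto
        next
          case False
          hence ca: "c \<noteq> a" and cb: "c \<noteq> b" by auto
          obtain w1 where w1: "w1 \<notin> C" "E c w1" "E w1 a" using R[OF c ab(1) ca] indep c ab by blast
          obtain w2 where w2: "w2 \<notin> C" "E c w2" "E w2 b" using R[OF c ab(2) cb] indep c ab by blast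
          show ?thesis
          proof (rule ccontr)
            assume nwc: "\<not> E w c"
            have "w1 \<noteq> w" using nwc w1 Esym by auto
            moreover have "w2 \<noteq> w" using nwc w2 Esym by auto
            ultimately show False
            proof (cases "w1 = w2")
              case True
              have "E b w1" using Esym[OF w2(3)] True by simp
              moreover have "a \<noteq> w1" "b \<noteq> w1" "a \<noteq> w" "b \<noteq> w" using w w1 ab by auto
              ultimately show False using no_c4[OF G g w(2) w(3), of w1] w1(3) ab(3) \<open>w1 \<noteq> w\<close>
                by auto
            next
              case False
              then show False
                using no_c6[OF G g w(2) w(3), of w2 c w1] w w1 w2 Esym ab c ca cb \<open>w1 \<noteq> w\<close> \<open>w2 \<noteq> w\<close>
                by auto
            qed
          qed
        qed
        then show "c \<in> nbhd V E w" unfolding nbhd_def using Ein by auto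
      qed
      then show ?thesis using w Ein by blast
    qed
  qed
  have clo: "\<And>v. nbhd V E v \<subseteq> closed_nbhd V E v" unfolding closed_nbhd_def by auto
  from main show ?thesis using clo by fastforce
qed

end
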